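(* Let $n=5$, $a=(1,1,1,1,1)$ and $p(x)=\sum_{i=1}^5(x_i^2-1)^2+\big(\sum_{i=1}^5 x_i\big)^2$ for $x\in\mathbb{R}^5$. Then there is no $\epsilon>0$ such that $p(x)-\epsilon$ is a sum of squares of polynomials; that is, the (infeasible) partition instance $\{1,1,1,1,1\}$ is not sos-refutable.
   Context: A partition instance $a_1,\ldots,a_n$ of positive integers is called sos-refutable if there exists $\epsilon>0$ such that $p_a(x)-\epsilon$ is a sum of squares of polynomials, where $p_a(x)=\sum_i(x_i^2-1)^2+(\sum_i a_ix_i)^2$. *)

theory Defs
  imports Main Complex_Main
begin

text \<open>Points of R^n are represented as functions nat => real; only the
coordinates 0..n-1 are used. A polynomial in n variables is identified with
the polynomial function it induces on R^n (faithful over the infinite field R).\<close>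

definition poly_fun :: "nat \<Rightarrow> ((nat \<Rightarrow> real) \<Rightarrow> real) \<Rightarrow> bool" where
  "poly_fun n f \<longleftrightarrow>
     (\<exists>A c. finite A \<and> (\<forall>\<alpha>\<in>A. \<forall>i\<ge>n. \<alpha> i = 0) \<and>
        (\<forall>x. f x = (\<Sum>\<alpha>\<in>A. c \<alpha> * (\<Prod>i<n. x i ^ \<alpha> i))))"

definition is_sos :: "nat \<Rightarrow> ((nat \<Rightarrow> real) \<Rightarrow> real) \<Rightarrow> bool" where
  "is_sos n f \<longleftrightarrow>
     (\<exists>qs. (\<forall>q\<in>set qs. poly_fun n q) \<and> (\<forall>x. f x = (\<Sum>q\<leftarrow>qs. (q x)^2)))"

definition partition_poly :: "nat \<Rightarrow> (nat \<Rightarrow> int) \<Rightarrow> (nat \<Rightarrow> real) \<Rightarrow> real" where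
  "partition_poly n a x = (\<Sum>i<n. ((x i)^2 - 1)^2) + (\<Sum>i<n. real_of_int (a i) * x i)^2"

definition sos_refutable :: "nat \<Rightarrow> (nat \<Rightarrow> int) \<Rightarrow> bool" where
  "sos_refutable n a \<longleftrightarrow>
     (\<exists>\<epsilon>>0. is_sos n (\<lambda>x. partition_poly n a x - \<epsilon>))"

end

theory Submission
  imports Defs "HOL-Computational_Algebra.Polynomial"
begin


definition mnm :: "(nat \<Rightarrow> real) \<Rightarrow> (nat \<Rightarrow> nat) \<Rightarrow> real" where
  "mnm x \<alpha> = (\<Prod>i<5. x i ^ \<alpha> i)"
definition dg :: "(nat \<Rightarrow> nat) \<Rightarrow> nat" where
  "dg \<alpha> = (\<Sum>i<5. \<alpha> i)"

lemma mnm_scale: "mnm (\<lambda>i. t * x i) \<alpha> = t ^ dg \<alpha> * mnm x \<alpha>"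
  unfolding mnm_def dg_def by (simp add: power_mult_distrib prod.distrib power_sum)

lemma coeff_sq_top:
  fixes h :: "real poly"
  assumes "degree h \<le> D"
  shows "coeff (h^2) (D + D) = (coeff h D)^2"
proof (cases "degree h = D")
  case True
  then show ?thesis using coeff_mult_degree_sum[of h h] by (simp add: power2_eq_square)
next
  case False
  then have lt: "degree h < D" using assms by simp
  then have "coeff h D = 0" by (simp add: coeff_eq_0)
  moreover have "degree (h^2) < D + D"
    using degree_mult_le[of h h] lt by (simp add: power2_eq_square)
  then have "coeff (h^2) (D+D) = 0" by (simp add: coeff_eq_0)
  ultimately show ?thesis by simp
qed

lemma coeff_sos_top:
  fixes hs :: "real poly list"
  assumes "\<forall>h\<in>set hs. degree h \<le> D"
  shows "coeff (\<Sum>h\<leftarrow>hs. h^2) (D + D) = (\<Sum>h\<leftarrow>hs. (coeff h D)^2)"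
  using assms by (induction hs) (simp_all add: coeff_sq_top)

lemma sum_list_pos:
  fixes f :: "'a \<Rightarrow> real"
  assumes "\<forall>y\<in>set xs. f y \<ge> 0" "x \<in> set xs" "f x > 0"
  shows "(\<Sum>y\<leftarrow>xs. f y) > 0"
  using assms
proof (induction xs)
  case Nil then show ?case by simp
next
  case (Cons a xs)
  have "(\<Sum>y\<leftarrow>xs. f y) \<ge> 0" using Cons.prems(1) by (induction xs) auto
  then show ?case using Cons by (cases "x = a") auto
qed

lemma sos_deg:
  fixes gs :: "real poly list"
  assumes "degree (\<Sum>h\<leftarrow>gs. h^2) \<le> 4" "g \<in> set gs"
  shows "degree g \<le> 2"
proof (rule ccontr)
  assume "\<not> degree g \<le> 2"
  define D where "D = Max (degree ` set gs)"
  have fin: "finite (degree ` set gs)" by simp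
  have gD: "degree g \<le> D" unfolding D_def using assms(2) fin by simp
  have D3: "D \<ge> 3" using gD \<open>\<not> degree g \<le> 2\<close> by simp
  have allD: "\<forall>h\<in>set gs. degree h \<le> D" unfolding D_def using fin by simp
  have "D \<in> degree ` set gs" unfolding D_def using assms(2) fin by (intro Max_in) auto
  then obtain g0 where g0: "g0 \<in> set gs" "degree g0 = D" by auto
  then have "g0 \<noteq> 0" using D3 by auto
  then have "coeff g0 D \<noteq> 0" using g0 by (metis leading_coeff_0_iff)
  then have "(\<Sum>h\<leftarrow>gs. (coeff h D)^2) > 0"
    using g0 by (intro sum_list_pos[where x=g0]) auto
  moreover have "coeff (\<Sum>h\<leftarrow>gs. h^2) (D + D) = 0"
    using assms(1) D3 by (intro coeff_eq_0) simp
  ultimately show False using coeff_sos_top[OF allD] by simp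
qed

lemma poly_sos_list: "poly (\<Sum>q\<leftarrow>qs. (G q)^2) t = (\<Sum>q\<leftarrow>qs. (poly (G q) t)^2)"
  by (induction qs) simp_all

lemma low_degree:
  fixes qs :: "((nat\<Rightarrow>real)\<Rightarrow>real) list" and R :: "(nat\<Rightarrow>real)\<Rightarrow>real"
  assumes rep: "\<And>q. q \<in> set qs \<Longrightarrow> finite (Af q) \<and> (\<forall>x. q x = (\<Sum>\<alpha>\<in>Af q. cf q \<alpha> * mnm x \<alpha>))"
  and id: "\<And>x. (\<Sum>q\<leftarrow>qs. (q x)^2) = R x"
  and ray: "\<And>x. \<exists>P. degree P \<le> 4 \<and> (\<forall>t. R (\<lambda>i. t * x i) = poly P t)"
  and q: "q \<in> set qs"
  shows "q x = (\<Sum>\<alpha>\<in>{\<alpha>\<in>Af q. dg \<alpha> \<le> 2}. cf q \<alpha> * mnm x \<alpha>)"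
proof -
  define G where "G q' = (\<Sum>\<alpha>\<in>Af q'. monom (cf q' \<alpha> * mnm x \<alpha>) (dg \<alpha>))" for q'
  have polyG: "poly (G q') t = q' (\<lambda>i. t * x i)" if "q' \<in> set qs" for q' t
    using rep[OF that] by (simp add: G_def poly_sum poly_monom mnm_scale mult_ac)
  obtain P where P: "degree P \<le> 4" "\<And>t. R (\<lambda>i. t * x i) = poly P t" using ray by blast
  have "poly (\<Sum>q\<leftarrow>qs. (G q)^2) t = poly P t" for t
  proof -
    have "poly (\<Sum>q\<leftarrow>qs. (G q)^2) t = (\<Sum>q\<leftarrow>qs. (poly (G q) t)^2)" by (rule poly_sos_list)
    also have "\<dots> = (\<Sum>q\<leftarrow>qs. (q (\<lambda>i. t * x i))^2)"
      by (intro arg_cong[where f=sum_list] map_cong) (auto simp: polyG)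
    also have "\<dots> = poly P t" using id P by simp
    finally show ?thesis .
  qed
  then have eqP: "(\<Sum>q\<leftarrow>qs. (G q)^2) = P" using poly_eq_poly_eq_iff by blast
  have degG: "degree (G q) \<le> 2"
  proof (rule sos_deg[of "map G qs"])
    show "degree (\<Sum>h\<leftarrow>map G qs. h^2) \<le> 4" using eqP P(1) by (simp add: o_def)
    show "G q \<in> set (map G qs)" using q by simp
  qed
  define S where "S = {\<alpha>. dg \<alpha> \<le> 2}"
  define f where "f \<alpha> = monom (cf q \<alpha> * mnm x \<alpha>) (dg \<alpha>)" for \<alpha>
  have fin: "finite (Af q)" using rep[OF q] by simp
  have split: "G q = sum f (Af q \<inter> S) + sum f (Af q - S)"
    unfolding G_def f_def using fin by (rule sum.Int_Diff)
  have cLo: "coeff (sum f (Af q \<inter> S)) n = 0" if "n > 2" for n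
    unfolding coeff_sum f_def coeff_monom using that by (intro sum.neutral) (auto simp: S_def)
  have cHi: "coeff (sum f (Af q - S)) n = 0" for n
  proof (cases "n > 2")
    case True
    have "coeff (G q) n = 0" using degG True by (intro coeff_eq_0) simp
    then show ?thesis using split cLo[OF True] by simp
  next
    case False
    then show ?thesis
      unfolding coeff_sum f_def coeff_monom by (intro sum.neutral) (auto simp: S_def)
  qed
  have Hi0: "sum f (Af q - S) = 0" by (rule poly_eqI) (simp add: cHi)
  have "q x = poly (G q) 1" using polyG[OF q, of 1] by simp
  also have "\<dots> = poly (sum f (Af q \<inter> S)) 1" using split Hi0 by simp
  also have "\<dots> = (\<Sum>\<alpha>\<in>Af q \<inter> S. cf q \<alpha> * mnm x \<alpha>)" by (simp add: f_def poly_sum poly_monom)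
  also have "Af q \<inter> S = {\<alpha>\<in>Af q. dg \<alpha> \<le> 2}" by (auto simp: S_def)
  finally show ?thesis .
qed



definition pt :: "real \<Rightarrow> real \<Rightarrow> real \<Rightarrow> real \<Rightarrow> real \<Rightarrow> nat \<Rightarrow> real" where
  "pt s0 s1 s2 s3 s4 = (\<lambda>i. if i = 0 then s0 else if i = 1 then s1 else if i = 2 then s2 else if i = 3 then s3 else s4)"

definition Vs :: "(nat \<Rightarrow> real) list" where
  "Vs = [pt s0 s1 s2 s3 s4. s0 \<leftarrow> [1,-1], s1 \<leftarrow> [1,-1], s2 \<leftarrow> [1,-1], s3 \<leftarrow> [1,-1], s4 \<leftarrow> [1,-1]]"

definition Wi :: "(nat \<Rightarrow> real) \<Rightarrow> real" where
  "Wi v = (let s = v 0 + v 1 + v 2 + v 3 + v 4 in 149 - 30 * s^2 + s^4)"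

lemma quad16_int:
  fixes G A0 A1 A2 A3 A4 G01 G02 G03 G04 G12 G13 G14 G23 G24 G34 :: real
  shows "3 * (\<Sum>v\<leftarrow>Vs. Wi v * (G + A0 * v 0 + A1 * v 1 + A2 * v 2 + A3 * v 3 + A4 * v 4 + G01 * v 0 * v 1 + G02 * v 0 * v 2 + G03 * v 0 * v 3 + G04 * v 0 * v 4 + G12 * v 1 * v 2 + G13 * v 1 * v 3 + G14 * v 1 * v 4 + G23 * v 2 * v 3 + G24 * v 2 * v 4 + G34 * v 3 * v 4)^2) = 384 * (4 * G - 1 * G01 - 1 * G02 - 1 * G03 - 1 * G04 - 1 * G12 - 1 * G13 - 1 * G14 - 1 * G23 - 1 * G24 - 1 * G34)^2 + 640 * (3 * G01 - 1 * G02 - 1 * G03 - 1 * G04 - 1 * G12 - 1 * G13 - 1 * G14 + 1 * G23 + 1 * G24 + 1 * G34)^2 + 320 * (4 * G02 - 2 * G03 - 2 * G04 - 2 * G12 + 1 * G13 + 1 * G14 - 1 * G23 - 1 * G24 + 2 * G34)^2 + 960 * (2 * G03 - 2 * G04 - 1 * G13 + 1 * G14 - 1 * G23 + 1 * G24)^2 + 960 * (2 * G12 - 1 * G13 - 1 * G14 - 1 * G23 - 1 * G24 + 2 * G34)^2 + 2880 * (1 * G13 - 1 * G14 - 1 * G23 + 1 * G24)^2 + 1536 * (1 * A0 - 1 * A1)^2 + 1536 * (1 * A0 - 1 * A2)^2 + 1536 * (1 * A0 - 1 * A3)^2 + 1536 * (1 * A0 - 1 * A4)^2 + 1536 * (1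 * A1 - 1 * A2)^2 + 1536 * (1 * A1 - 1 * A3)^2 + 1536 * (1 * A1 - 1 * A4)^2 + 1536 * (1 * A2 - 1 * A3)^2 + 1536 * (1 * A2 - 1 * A4)^2 + 1536 * (1 * A3 - 1 * A4)^2"
  unfolding Vs_def Wi_def pt_def by (simp add: power2_eq_square) algebra



lemma sum5: "(\<Sum>i<5. f i) = f 0 + f 1 + f 2 + f 3 + f (4::nat)"
  by (simp add: eval_nat_numeral)

definition formv :: "real \<Rightarrow> (nat \<Rightarrow> real) \<Rightarrow> (nat \<Rightarrow> nat \<Rightarrow> real) \<Rightarrow> (nat \<Rightarrow> real) \<Rightarrow> real" where
  "formv d a e y = d + (\<Sum>i<5. a i * y i) + (\<Sum>i<5. \<Sum>j<5. e i j * y i * y j)"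

lemma Vs_pm: "v \<in> set Vs \<Longrightarrow> v i = 1 \<or> v i = -1"
  unfolding Vs_def pt_def by (auto split: if_splits)

lemma formv_lin: "formv d a e v + k * formv d' a' e' v =
   formv (d + k*d') (\<lambda>i. a i + k * a' i) (\<lambda>i j. e i j + k * e' i j) v"
  by (simp add: formv_def sum.distrib sum_distrib_left algebra_simps)

lemma delta1: "(i::nat) < 5 \<Longrightarrow> (\<Sum>j<5. (if j = i then 1 else 0) * v j) = (v i :: real)"
  by (simp add: if_distrib[of "\<lambda>z. z * v _"] sum.delta sum.delta' cong: if_cong)

lemma delta2: "(i::nat) < 5 \<Longrightarrow> (j::nat) < 5 \<Longrightarrow>
  (\<Sum>k<5. \<Sum>l<5. (if k = i \<and> l = j then 1 else 0) * v k * v l) = (v i * v j :: real)"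
proof -
  assume "i < 5" "j < 5"
  have "(\<Sum>k<5. \<Sum>l<5. (if k = i \<and> l = j then 1 else 0) * v k * v l) =
        (\<Sum>k<5. if k = i then v k * v j else (0::real))"
  proof (intro sum.cong refl)
    fix k :: nat
    show "(\<Sum>l<5. (if k = i \<and> l = j then 1 else 0) * v k * v l) = (if k = i then v k * v j else 0)"
    proof (cases "k = i")
      case True
      have "(\<Sum>l<5. (if k = i \<and> l = j then 1 else 0) * v k * v l) = v k * (\<Sum>l<5. (if l = j then 1 else 0) * v l)"
        using True by (simp add: sum_distrib_left mult_ac)
      then show ?thesis using True delta1[OF \<open>j<5\<close>] by simp
    qed simp
  qed
  also have "\<dots> = v i * v j" using \<open>i<5\<close> by (simp add: sum.delta sum.delta')
  finally show ?thesis .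
qed

lemma mnm_cube:
  assumes "dg \<alpha> \<le> 2"
  shows "\<exists>d a e. \<forall>v\<in>set Vs. mnm v \<alpha> = formv d a e v"
proof -
  define Od where "Od = {i\<in>{..<5::nat}. odd (\<alpha> i)}"
  have finOd: "finite Od" and subOd: "Od \<subseteq> {..<5}" by (auto simp: Od_def)
  have mnm_Od: "mnm v \<alpha> = (\<Prod>i\<in>Od. v i)" if "v \<in> set Vs" for v
  proof -
    have "mnm v \<alpha> = (\<Prod>i<5. if i \<in> Od then v i else 1)"
      unfolding mnm_def
    proof (intro prod.cong refl)
      fix i assume "i \<in> {..<5::nat}"
      show "v i ^ \<alpha> i = (if i \<in> Od then v i else 1)"
        using Vs_pm[OF that, of i] \<open>i \<in> _\<close> by (auto simp: Od_def)
    qed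
    also have "\<dots> = (\<Prod>i\<in>Od. v i)"
      using subOd by (simp add: prod.If_cases Int_absorb1)
    finally show ?thesis .
  qed
  have "card Od = (\<Sum>i\<in>Od. 1)" by simp
  also have "\<dots> \<le> (\<Sum>i\<in>Od. \<alpha> i)" by (intro sum_mono) (auto simp: Od_def intro!: Suc_leI odd_pos)
  also have "\<dots> \<le> (\<Sum>i<5. \<alpha> i)" using subOd by (intro sum_mono2) auto
  finally have cOd: "card Od \<le> 2" using assms by (simp add: dg_def)
  consider "card Od = 0" | "card Od = 1" | "card Od = 2" using cOd by linarith
  then show ?thesis
  proof cases
    case 1
    then have "Od = {}" using finOd by simp
    then show ?thesis using mnm_Od by (intro exI[of _ 1] exI[of _ "\<lambda>_. 0"] exI[of _ "\<lambda>_ _. 0"]) (simp add: formv_def)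
  next
    case 2
    then obtain i where "Od = {i}" by (meson card_1_singletonE)
    then have "i < 5" using subOd by auto
    then show ?thesis using mnm_Od \<open>Od = {i}\<close>
      by (intro exI[of _ 0] exI[of _ "\<lambda>j. if j = i then 1 else 0"] exI[of _ "\<lambda>_ _. 0"]) (simp add: formv_def delta1)
  next
    case 3
    then obtain i j where "Od = {i,j}" "i \<noteq> j" by (meson card_2_iff)
    then have "i < 5" "j < 5" using subOd by auto
    then show ?thesis using mnm_Od \<open>Od = {i,j}\<close> \<open>i \<noteq> j\<close>
      by (intro exI[of _ 0] exI[of _ "\<lambda>_. 0"] exI[of _ "\<lambda>k l. if k = i \<and> l = j then 1 else 0"]) (simp add: formv_def delta2)
  qed
qed

lemma rep_form:
  assumes "finite A" "\<forall>\<alpha>\<in>A. dg \<alpha> \<le> 2"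
  shows "\<exists>d a e. \<forall>v\<in>set Vs. (\<Sum>\<alpha>\<in>A. c \<alpha> * mnm v \<alpha>) = formv d a e v"
  using assms
proof (induction A rule: finite_induct)
  case empty
  show ?case by (intro exI[of _ 0] exI[of _ "\<lambda>_. 0"] exI[of _ "\<lambda>_ _. 0"]) (simp add: formv_def)
next
  case (insert \<beta> A)
  then obtain d a e where IH: "\<forall>v\<in>set Vs. (\<Sum>\<alpha>\<in>A. c \<alpha> * mnm v \<alpha>) = formv d a e v" by auto
  have "dg \<beta> \<le> 2" using insert.prems by simp
  from mnm_cube[OF this] obtain d' a' e' where M: "\<forall>v\<in>set Vs. mnm v \<beta> = formv d' a' e' v"
    by blast
  show ?case
  proof (intro exI ballI)
    fix v assume v: "v \<in> set Vs"
    have "(\<Sum>\<alpha>\<in>insert \<beta> A. c \<alpha> * mnm v \<alpha>) = formv d a e v + c \<beta> * formv d' a' e' v"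
      using insert.hyps IH M v by simp
    also have "\<dots> = formv (d + c \<beta> * d') (\<lambda>i. a i + c \<beta> * a' i) (\<lambda>i j. e i j + c \<beta> * e' i j) v"
      by (rule formv_lin)
    finally show "(\<Sum>\<alpha>\<in>insert \<beta> A. c \<alpha> * mnm v \<alpha>) = \<dots>" .
  qed
qed



lemma formv_cube:
  assumes "v \<in> set Vs"
  shows "formv d a e v = (d + e 0 0 + e 1 1 + e 2 2 + e 3 3 + e 4 4) + a 0 * v 0 + a 1 * v 1 + a 2 * v 2 + a 3 * v 3 + a 4 * v 4 + (e 0 1 + e 1 0) * v 0 * v 1 + (e 0 2 + e 2 0) * v 0 * v 2 + (e 0 3 + e 3 0) * v 0 * v 3 + (e 0 4 + e 4 0) * v 0 * v 4 + (e 1 2 + e 2 1) * v 1 * v 2 + (e 1 3 + e 3 1) * v 1 * v 3 + (e 1 4 + e 4 1) * v 1 * v 4 + (e 2 3 + e 3 2) * v 2 * v 3 + (e 2 4 + e 4 2) * v 2 * v 4 + (e 3 4 + e 4 3) * v 3 * v 4"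
proof -
  have h: "v i * v i = 1" for i using Vs_pm[OF assms, of i] by auto
  show ?thesis unfolding formv_def sum5 using h[of 0] h[of 1] h[of 2] h[of 3] h[of 4] by algebra
qed

lemma psd_form: "(\<Sum>v\<leftarrow>Vs. Wi v * (formv d a e v)^2) \<ge> 0"
proof -
  have "(\<Sum>v\<leftarrow>Vs. Wi v * (formv d a e v)^2) = (\<Sum>v\<leftarrow>Vs. Wi v * ((d + e 0 0 + e 1 1 + e 2 2 + e 3 3 + e 4 4) + a 0 * v 0 + a 1 * v 1 + a 2 * v 2 + a 3 * v 3 + a 4 * v 4 + (e 0 1 + e 1 0) * v 0 * v 1 + (e 0 2 + e 2 0) * v 0 * v 2 + (e 0 3 + e 3 0) * v 0 * v 3 + (e 0 4 + e 4 0) * v 0 * v 4 + (e 1 2 + e 2 1) * v 1 * v 2 + (e 1 3 + e 3 1) * v 1 * v 3 + (e 1 4 + e 4 1) * v 1 * v 4 + (e 2 3 + e 3 2) * v 2 * v 3 + (e 2 4 + e 4 2) * v 2 * v 4 + (e 3 4 + e 4 3) * v 3 * v 4)^2)"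
    by (intro arg_cong[where f=sum_list] map_cong refl) (simp add: formv_cube)
  moreover have "3 * (\<Sum>v\<leftarrow>Vs. Wi v * ((d + e 0 0 + e 1 1 + e 2 2 + e 3 3 + e 4 4) + a 0 * v 0 + a 1 * v 1 + a 2 * v 2 + a 3 * v 3 + a 4 * v 4 + (e 0 1 + e 1 0) * v 0 * v 1 + (e 0 2 + e 2 0) * v 0 * v 2 + (e 0 3 + e 3 0) * v 0 * v 3 + (e 0 4 + e 4 0) * v 0 * v 4 + (e 1 2 + e 2 1) * v 1 * v 2 + (e 1 3 + e 3 1) * v 1 * v 3 + (e 1 4 + e 4 1) * v 1 * v 4 + (e 2 3 + e 3 2) * v 2 * v 3 + (e 2 4 + e 4 2) * v 2 * v 4 + (e 3 4 + e 4 3) * v 3 * v 4)^2) \<ge> 0"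
    unfolding quad16_int[of "d + e 0 0 + e 1 1 + e 2 2 + e 3 3 + e 4 4" "a 0" "a 1" "a 2" "a 3" "a 4" "e 0 1 + e 1 0" "e 0 2 + e 2 0" "e 0 3 + e 3 0" "e 0 4 + e 4 0" "e 1 2 + e 2 1" "e 1 3 + e 3 1" "e 1 4 + e 4 1" "e 2 3 + e 3 2" "e 2 4 + e 4 2" "e 3 4 + e 4 3"] by (intro add_nonneg_nonneg mult_nonneg_nonneg) auto
  ultimately show ?thesis by simp
qed

lemma lhs_val: "(\<Sum>v\<leftarrow>Vs. Wi v * (partition_poly 5 (\<lambda>_. 1) v - \<epsilon>)) = -2048 * \<epsilon>"
  by (simp add: Vs_def Wi_def pt_def partition_poly_def sum5)

lemma ray: "\<exists>P. degree P \<le> 4 \<and> (\<forall>t. partition_poly 5 (\<lambda>_. 1) (\<lambda>i. t * x i) - \<epsilon> = poly P t)"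
proof (intro exI conjI allI)
  let ?P = "(\<Sum>i<5. [:-1, 0, x i^2:]^2) + [:0, \<Sum>i<5. x i:]^2 - [:\<epsilon>:]"
  show "partition_poly 5 (\<lambda>_. 1) (\<lambda>i. t * x i) - \<epsilon> = poly ?P t" for t
    by (simp add: partition_poly_def sum5 poly_sum power2_eq_square algebra_simps)
  have d1: "degree ([:-1, 0, c:]^2) \<le> 4" for c :: real
  proof -
    have "degree [:-1, 0, c:] \<le> 2" by (simp add: degree_pCons_le)
    then show ?thesis using degree_power_le[of "[:-1, 0, c:]" 2] by simp
  qed
  have d2: "degree ([:0, c:]^2) \<le> 4" for c :: real
  proof -
    have "degree [:0, c:] \<le> 2" by (simp add: degree_pCons_le)
    then show ?thesis using degree_power_le[of "[:0, c:]" 2] by simp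
  qed
  have "degree (\<Sum>i<5. [:-1, 0, x i^2:]^2) \<le> 4" by (intro degree_sum_le) (auto simp: d1)
  then have "degree ((\<Sum>i<5. [:-1, 0, x i^2:]^2) + [:0, \<Sum>i<5. x i:]^2) \<le> 4"
    using d2 by (intro degree_add_le)
  then show "degree ?P \<le> 4" by (intro degree_diff_le) simp_all
qed

lemma swap_sum: "(\<Sum>v\<leftarrow>V. w v * (\<Sum>q\<leftarrow>Q. h q v)) = (\<Sum>q\<leftarrow>Q. \<Sum>v\<leftarrow>V. w v * h q v)"
  for w :: "'a \<Rightarrow> real"
  by (induction Q) (simp_all add: distrib_left sum_list_addf)

lemma sum_list_nn: "(\<And>q. q \<in> set Q \<Longrightarrow> f q \<ge> (0::real)) \<Longrightarrow> (\<Sum>q\<leftarrow>Q. f q) \<ge> 0"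
  by (induction Q) auto



theorem proposition5p5:
  shows "\<not> sos_refutable 5 (\<lambda>_. 1)"
proof
  assume "sos_refutable 5 (\<lambda>_. 1)"
  then obtain \<epsilon> qs where eps: "\<epsilon> > 0" and pf: "\<forall>q\<in>set qs. poly_fun 5 q"
    and id: "\<forall>x. partition_poly 5 (\<lambda>_. 1) x - \<epsilon> = (\<Sum>q\<leftarrow>qs. (q x)^2)"
    unfolding sos_refutable_def is_sos_def by blast
  have "\<forall>q\<in>set qs. \<exists>p. finite (fst p) \<and> (\<forall>x. q x = (\<Sum>\<alpha>\<in>fst p. snd p \<alpha> * mnm x \<alpha>))"
  proof
    fix q assume "q \<in> set qs"
    then obtain A c where "finite A" "\<forall>x. q x = (\<Sum>\<alpha>\<in>A. c \<alpha> * (\<Prod>i<5. x i ^ \<alpha> i))"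
      using pf unfolding poly_fun_def by blast
    then show "\<exists>p. finite (fst p) \<and> (\<forall>x. q x = (\<Sum>\<alpha>\<in>fst p. snd p \<alpha> * mnm x \<alpha>))"
      by (intro exI[of _ "(A, c)"]) (simp add: mnm_def)
  qed
  then obtain f where f: "\<forall>q\<in>set qs. finite (fst (f q)) \<and> (\<forall>x. q x = (\<Sum>\<alpha>\<in>fst (f q). snd (f q) \<alpha> * mnm x \<alpha>))"
    by (metis bchoice)
  define Af where "Af q = fst (f q)" for q
  define cf where "cf q = snd (f q)" for q
  have rep: "finite (Af q) \<and> (\<forall>x. q x = (\<Sum>\<alpha>\<in>Af q. cf q \<alpha> * mnm x \<alpha>))" if "q \<in> set qs" for q
    using f that unfolding Af_def cf_def by blast
  have low: "q x = (\<Sum>\<alpha>\<in>{\<alpha>\<in>Af q. dg \<alpha> \<le> 2}. cf q \<alpha> * mnm x \<alpha>)" if "q \<in> set qs" for q x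
    by (rule low_degree[where R="\<lambda>x. partition_poly 5 (\<lambda>_. 1) x - \<epsilon>", OF rep _ ray that])
       (use id in auto)
  have nn: "(\<Sum>v\<leftarrow>Vs. Wi v * (q v)^2) \<ge> 0" if q: "q \<in> set qs" for q
  proof -
    have "finite {\<alpha>\<in>Af q. dg \<alpha> \<le> 2}" using rep[OF q] by simp
    from rep_form[OF this, of "cf q"] obtain d a e where
      de: "\<forall>v\<in>set Vs. (\<Sum>\<alpha>\<in>{\<alpha>\<in>Af q. dg \<alpha> \<le> 2}. cf q \<alpha> * mnm v \<alpha>) = formv d a e v" by auto
    have "(\<Sum>v\<leftarrow>Vs. Wi v * (q v)^2) = (\<Sum>v\<leftarrow>Vs. Wi v * (formv d a e v)^2)"
      by (intro arg_cong[where f=sum_list] map_cong refl) (simp add: low[OF q] de)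
    then show ?thesis using psd_form by simp
  qed
  have "-2048 * \<epsilon> = (\<Sum>v\<leftarrow>Vs. Wi v * (partition_poly 5 (\<lambda>_. 1) v - \<epsilon>))"
    by (simp add: lhs_val)
  also have "\<dots> = (\<Sum>v\<leftarrow>Vs. Wi v * (\<Sum>q\<leftarrow>qs. (q v)^2))" using id by simp
  also have "\<dots> = (\<Sum>q\<leftarrow>qs. \<Sum>v\<leftarrow>Vs. Wi v * (q v)^2)" by (rule swap_sum)
  also have "\<dots> \<ge> 0" by (rule sum_list_nn) (rule nn)
  finally show False using eps by simp
qed


end
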